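(* Let $G$ be a strongly connected directed graph on a finite vertex set (self-loops allowed) and let $\beta$ be a balanced graph function on $G$. Then $\beta$ is the unique balanced graph function in its equivalence class if and only if the graph $G_\beta^w$ is strongly connected for every real $w$.
   Context: A graph function on $G$ assigns a real weight $\beta_{uv}$ to every edge $(u,v)$ of $G$. For a vertex $v$, $\beta_v^{\text{in}}=\max_{u:(u,v)\in G}\beta_{uv}$ and $\beta_v^{\text{out}}=\max_{w:(v,w)\in G}\beta_{vw}$; $\beta$ is balanced if $\beta_v^{\text{in}}=\beta_v^{\text{out}}$ for all $v$. Two graph functions $\alpha,\gamma$ on $G$ are equivalent if $\sum_{\ell=1}^k(\alpha_{v_\ell v_{\ell+1}}-\gamma_{v_\ell v_{\ell+1}})=0$ for every directed cycle $(v_1,\dots,v_k)$ of $G$ (with $v_{k+1}=v_1$). For real $w$, $G_\beta^w$ is the subgraph of $G$ consisting of the edges $(u,v)$ with $\beta_{uv}\ge w$, with isolated vertices removed (a vertex carrying a self-loop is not considered isolated). *)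

theory Defs
  imports Main "HOL-Library.Extended_Real"
begin

text \<open>A graph function is a map
beta :: 'a => 'a => real; only its values on edges of E matter.\<close>

definition strongly_connected :: "'a set \<Rightarrow> ('a \<times> 'a) set \<Rightarrow> bool" where
  "strongly_connected V E \<longleftrightarrow> (\<forall>u\<in>V. \<forall>v\<in>V. (u, v) \<in> E\<^sup>*)"

definition beta_in :: "('a \<times> 'a) set \<Rightarrow> ('a \<Rightarrow> 'a \<Rightarrow> real) \<Rightarrow> 'a \<Rightarrow> real" where
  "beta_in E \<beta> v = Max {\<beta> u v | u. (u, v) \<in> E}"

definition beta_out :: "('a \<times> 'a) set \<Rightarrow> ('a \<Rightarrow> 'a \<Rightarrow> real) \<Rightarrow> 'a \<Rightarrow> real" where
  "beta_out E \<beta> v = Max {\<beta> v w | w. (v, w) \<in> E}"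

definition balanced :: "'a set \<Rightarrow> ('a \<times> 'a) set \<Rightarrow> ('a \<Rightarrow> 'a \<Rightarrow> real) \<Rightarrow> bool" where
  "balanced V E \<beta> \<longleftrightarrow> (\<forall>v\<in>V. beta_in E \<beta> v = beta_out E \<beta> v)"

definition directed_cycle :: "('a \<times> 'a) set \<Rightarrow> 'a list \<Rightarrow> bool" where
  "directed_cycle E vs \<longleftrightarrow> vs \<noteq> [] \<and> distinct vs \<and>
     (\<forall>i < length vs. (vs ! i, vs ! ((i + 1) mod length vs)) \<in> E)"

definition cycle_sum :: "('a \<Rightarrow> 'a \<Rightarrow> real) \<Rightarrow> 'a list \<Rightarrow> real" where
  "cycle_sum \<beta> vs = (\<Sum>i < length vs. \<beta> (vs ! i) (vs ! ((i + 1) mod length vs)))"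

definition equivalent :: "('a \<times> 'a) set \<Rightarrow> ('a \<Rightarrow> 'a \<Rightarrow> real) \<Rightarrow> ('a \<Rightarrow> 'a \<Rightarrow> real) \<Rightarrow> bool" where
  "equivalent E \<alpha> \<gamma> \<longleftrightarrow>
     (\<forall>vs. directed_cycle E vs \<longrightarrow> cycle_sum (\<lambda>u v. \<alpha> u v - \<gamma> u v) vs = 0)"

text \<open>G_beta^w: edges with weight \<ge> w, isolated vertices removed (a vertex is kept
iff it is incident to some remaining edge, self-loops included).\<close>
definition thr_edges :: "('a \<times> 'a) set \<Rightarrow> ('a \<Rightarrow> 'a \<Rightarrow> real) \<Rightarrow> real \<Rightarrow> ('a \<times> 'a) set" where
  "thr_edges E \<beta> w = {(u, v). (u, v) \<in> E \<and> \<beta> u v \<ge> w}"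

definition thr_verts :: "('a \<times> 'a) set \<Rightarrow> ('a \<Rightarrow> 'a \<Rightarrow> real) \<Rightarrow> real \<Rightarrow> 'a set" where
  "thr_verts E \<beta> w = fst ` thr_edges E \<beta> w \<union> snd ` thr_edges E \<beta> w"

end

theory Submission
  imports Defs
begin


fun walk :: "('a \<times> 'a) set \<Rightarrow> 'a list \<Rightarrow> bool" where
  "walk E [] = True" | "walk E [x] = True" | "walk E (x # y # r) = ((x, y) \<in> E \<and> walk E (y # r))"

fun psum :: "('a \<Rightarrow> 'a \<Rightarrow> real) \<Rightarrow> 'a list \<Rightarrow> real" where
  "psum d [] = 0" | "psum d [x] = 0" | "psum d (x # y # r) = d x y + psum d (y # r)"

lemma psum_join: "psum d (xs @ y # ys) = psum d (xs @ [y]) + psum d (y # ys)"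
proof (induction xs)
  case Nil then show ?case by simp
next
  case (Cons a xs) then show ?case by (cases xs) auto
qed

lemma walk_join: "walk E (xs @ y # ys) \<longleftrightarrow> walk E (xs @ [y]) \<and> walk E (y # ys)"
proof (induction xs)
  case Nil then show ?case by simp
next
  case (Cons a xs) then show ?case by (cases xs) auto
qed

lemma psum_snoc: "xs \<noteq> [] \<Longrightarrow> psum d (xs @ [c]) = psum d xs + d (last xs) c"
proof (induction xs)
  case Nil then show ?case by simp
next
  case (Cons a xs) then show ?case by (cases xs) auto
qed

lemma walk_snoc: "xs \<noteq> [] \<Longrightarrow> walk E (xs @ [c]) \<longleftrightarrow> walk E xs \<and> (last xs, c) \<in> E"
proof (induction xs)
  case Nil then show ?case by simp
next
  case (Cons a xs) then show ?case by (cases xs) auto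
qed

lemma psum_tele: "xs \<noteq> [] \<Longrightarrow> psum (\<lambda>x y. q x - q y) xs = q (hd xs) - q (last xs)"
proof (induction xs)
  case Nil then show ?case by simp
next
  case (Cons a xs) then show ?case by (cases xs) auto
qed

lemma walk_index: "walk E xs \<longleftrightarrow> (\<forall>i. Suc i < length xs \<longrightarrow> (xs ! i, xs ! Suc i) \<in> E)"
proof (induction E xs rule: walk.induct)
  case (3 E x y r)
  show ?case
  proof
    assume "walk E (x # y # r)"
    then show "\<forall>i. Suc i < length (x # y # r) \<longrightarrow> ((x # y # r) ! i, (x # y # r) ! Suc i) \<in> E"
      using 3 by (auto simp: nth_Cons split: nat.split)
  next
    assume H: "\<forall>i. Suc i < length (x # y # r) \<longrightarrow> ((x # y # r) ! i, (x # y # r) ! Suc i) \<in> E"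
    have "(x, y) \<in> E" using H[rule_format, of 0] by simp
    moreover have "\<forall>i. Suc i < length (y # r) \<longrightarrow> ((y # r) ! i, (y # r) ! Suc i) \<in> E"
      using H by (metis Suc_less_eq length_Cons nth_Cons_Suc)
    ultimately show "walk E (x # y # r)" using 3 by simp
  qed
qed auto

lemma psum_index: "psum d xs = (\<Sum>i < length xs - 1. d (xs ! i) (xs ! Suc i))"
proof (induction d xs rule: psum.induct)
  case (3 d x y r)
  have "(\<Sum>i < length (x # y # r) - 1. d ((x # y # r) ! i) ((x # y # r) ! Suc i))
     = (\<Sum>i < Suc (length (y # r) - 1). d ((x # y # r) ! i) ((x # y # r) ! Suc i))" by simp
  also have "\<dots> = d x y + (\<Sum>i < length (y # r) - 1. d ((y # r) ! i) ((y # r) ! Suc i))"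
    by (subst sum.lessThan_Suc_shift) simp
  finally show ?case using 3 by simp
qed auto

lemma cycle_sum_psum:
  assumes "vs \<noteq> []"
  shows "cycle_sum d vs = psum d (vs @ [hd vs])"
proof -
  let ?n = "length vs"
  have "psum d (vs @ [hd vs]) = (\<Sum>i < ?n. d ((vs @ [hd vs]) ! i) ((vs @ [hd vs]) ! Suc i))"
    by (simp add: psum_index)
  also have "\<dots> = (\<Sum>i < ?n. d (vs ! i) (vs ! ((i + 1) mod ?n)))"
  proof (rule sum.cong)
    fix i assume "i \<in> {..<?n}"
    then have i: "i < ?n" by simp
    show "d ((vs @ [hd vs]) ! i) ((vs @ [hd vs]) ! Suc i) = d (vs ! i) (vs ! ((i + 1) mod ?n))"
    proof (cases "Suc i < ?n")
      case True then show ?thesis using i by (simp add: nth_append)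
    next
      case False
      then have "Suc i = ?n" using i by simp
      then show ?thesis using i assms by (simp add: nth_append hd_conv_nth)
    qed
  qed simp
  finally show ?thesis by (simp add: cycle_sum_def)
qed

lemma directed_cycle_walk:
  assumes "vs \<noteq> []" "distinct vs" "walk E (vs @ [hd vs])"
  shows "directed_cycle E vs"
  unfolding directed_cycle_def
proof (intro conjI allI impI)
  fix i assume i: "i < length vs"
  have W: "((vs @ [hd vs]) ! i, (vs @ [hd vs]) ! Suc i) \<in> E"
    using assms(3) i by (simp add: walk_index)
  show "(vs ! i, vs ! ((i + 1) mod length vs)) \<in> E"
  proof (cases "Suc i < length vs")
    case True then show ?thesis using W i by (simp add: nth_append)
  next
    case False
    then have "Suc i = length vs" using i by simp
    then show ?thesis using W i assms(1) by (simp add: nth_append hd_conv_nth)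
  qed
qed (use assms in auto)

lemma closed_walk_zero:
  assumes cyc: "\<forall>vs. directed_cycle E vs \<longrightarrow> cycle_sum d vs = 0"
  shows "walk E xs \<Longrightarrow> xs \<noteq> [] \<Longrightarrow> hd xs = last xs \<Longrightarrow> psum d xs = 0"
proof (induction "length xs" arbitrary: xs rule: less_induct)
  case less
  show ?case
  proof (cases "length xs = 1")
    case True
    then obtain x where "xs = [x]" by (metis One_nat_def length_0_conv length_Suc_conv)
    then show ?thesis by simp
  next
    case False
    define vs where "vs = butlast xs"
    define l where "l = last xs"
    have xs: "xs = vs @ [l]" using less.prems(2) by (simp add: vs_def l_def)
    have vne: "vs \<noteq> []" using False xs by auto
    have hxv: "hd xs = hd vs" using xs vne by simp
    have hdv: "hd vs = l" using less.prems(3) hxv by (simp add: l_def)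
    show ?thesis
    proof (cases "distinct vs")
      case True
      have "directed_cycle E vs" using directed_cycle_walk[OF vne True] less.prems(1) xs hdv by simp
      then have "cycle_sum d vs = 0" using cyc by blast
      then show ?thesis using cycle_sum_psum[OF vne, of d] xs hdv by simp
    next
      case False
      then obtain A B C x where vsd: "vs = A @ [x] @ B @ [x] @ C" using not_distinct_decomp by blast
      have xs2: "xs = A @ x # B @ x # (C @ [l])" using xs vsd by simp
      have s1: "psum d xs = psum d (A @ x # (C @ [l])) + psum d (x # B @ [x])"
      proof -
        have "psum d xs = psum d (A @ [x]) + psum d (x # B @ x # (C @ [l]))"
          using xs2 psum_join[of d A x "B @ x # (C @ [l])"] by simp
        also have "psum d (x # B @ x # (C @ [l])) = psum d (x # B @ [x]) + psum d (x # (C @ [l]))"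
          using psum_join[of d "x # B" x "C @ [l]"] by simp
        also have "psum d (A @ [x]) = psum d (A @ x # (C @ [l])) - psum d (x # (C @ [l]))"
          using psum_join[of d A x "C @ [l]"] by simp
        finally show ?thesis by simp
      qed
      have w1: "walk E (A @ x # (C @ [l]))" and w2: "walk E (x # B @ [x])"
      proof -
        have "walk E (A @ [x]) \<and> walk E (x # B @ x # (C @ [l]))"
          using less.prems(1) xs2 walk_join[of E A x "B @ x # (C @ [l])"] by simp
        moreover have "walk E (x # B @ x # (C @ [l])) \<longleftrightarrow> walk E (x # B @ [x]) \<and> walk E (x # (C @ [l]))"
          using walk_join[of E "x # B" x "C @ [l]"] by simp
        ultimately show "walk E (A @ x # (C @ [l]))" "walk E (x # B @ [x])"
          using walk_join[of E A x "C @ [l]"] by auto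
      qed
      have l1: "length (A @ x # (C @ [l])) < length xs" using xs2 by simp
      have l2: "length (x # B @ [x]) < length xs" using xs2 by simp
      have h0: "hd (A @ x # (C @ [l])) = hd xs" unfolding xs2 by (cases A) simp_all
      have h1: "hd (A @ x # (C @ [l])) = last (A @ x # (C @ [l]))"
        using h0 less.prems(3) by (simp add: l_def)
      have "psum d (A @ x # (C @ [l])) = 0" using less.hyps[OF l1 w1 _ h1] by simp
      moreover have "psum d (x # B @ [x]) = 0" using less.hyps[OF l2 w2] by simp
      ultimately show ?thesis using s1 by simp
    qed
  qed
qed

lemma walk_exists:
  assumes "(a, b) \<in> E\<^sup>*"
  shows "\<exists>xs. walk E xs \<and> xs \<noteq> [] \<and> hd xs = a \<and> last xs = b"
  using assms
proof (induction rule: rtrancl_induct)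
  case base then show ?case by (intro exI[of _ "[a]"]) simp
next
  case (step y z)
  then obtain xs where "walk E xs" "xs \<noteq> []" "hd xs = a" "last xs = y" by blast
  then show ?case using step by (intro exI[of _ "xs @ [z]"]) (simp add: walk_snoc)
qed

lemma potential_exists:
  assumes EV: "E \<subseteq> V \<times> V" and sc: "strongly_connected V E"
    and cyc: "\<forall>vs. directed_cycle E vs \<longrightarrow> cycle_sum d vs = 0"
  shows "\<exists>p. \<forall>(x, y)\<in>E. d x y = p y - p x"
proof (cases "V = {}")
  case True then show ?thesis using EV by auto
next
  case False
  then obtain r where r: "r \<in> V" by blast
  define W where "W v = (SOME xs. walk E xs \<and> xs \<noteq> [] \<and> hd xs = r \<and> last xs = v)" for v
  have Wp: "walk E (W v) \<and> W v \<noteq> [] \<and> hd (W v) = r \<and> last (W v) = v" if "v \<in> V" for v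
  proof -
    have "(r, v) \<in> E\<^sup>*" using sc r that by (simp add: strongly_connected_def)
    from walk_exists[OF this] show ?thesis unfolding W_def by (rule someI_ex)
  qed
  define p where "p v = psum d (W v)" for v
  show ?thesis
  proof (intro exI[of _ p] ballI, clarify)
    fix x y assume xy: "(x, y) \<in> E"
    then have xV: "x \<in> V" and yV: "y \<in> V" using EV by auto
    have "(y, r) \<in> E\<^sup>*" using sc r yV by (simp add: strongly_connected_def)
    from walk_exists[OF this] obtain zs where zs: "walk E zs" "zs \<noteq> []" "hd zs = y" "last zs = r" by blast
    then obtain zs' where zs': "zs = y # zs'" by (cases zs) auto
    note Wx = Wp[OF xV] and Wy = Wp[OF yV]
    have c1: "psum d (W x @ y # zs') = 0"
    proof (rule closed_walk_zero[OF cyc])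
      show "walk E (W x @ y # zs')" using walk_join[of E "W x" y zs'] walk_snoc[of "W x" E y] Wx xy zs zs' by simp
      show "W x @ y # zs' \<noteq> []" by simp
      show "hd (W x @ y # zs') = last (W x @ y # zs')" using Wx zs zs' by auto
    qed
    have e1: "psum d (W x @ y # zs') = p x + d x y + psum d zs"
      using psum_join[of d "W x" y zs'] psum_snoc[of "W x" d y] Wx zs' by (simp add: p_def)
    define bl where "bl = butlast (W y)"
    have Wyb: "W y = bl @ [y]" unfolding bl_def using Wy by (metis append_butlast_last_id)
    have c2: "psum d (bl @ y # zs') = 0"
    proof (rule closed_walk_zero[OF cyc])
      show "walk E (bl @ y # zs')" using walk_join[of E bl y zs'] Wy Wyb zs zs' by simp
      show "bl @ y # zs' \<noteq> []" by simp
      show "hd (bl @ y # zs') = last (bl @ y # zs')" using Wy Wyb zs zs' by (cases bl) auto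
    qed
    have e2: "psum d (bl @ y # zs') = p y + psum d zs"
      using psum_join[of d bl y zs'] Wyb zs' by (simp add: p_def)
    show "d x y = p y - p x" using c1 e1 c2 e2 by simp
  qed
qed



lemma thr_edges_iff[simp]: "(x, y) \<in> thr_edges E \<beta> w \<longleftrightarrow> (x, y) \<in> E \<and> w \<le> \<beta> x y"
  by (simp add: thr_edges_def)

lemma thr_verts_iff: "v \<in> thr_verts E \<beta> w \<longleftrightarrow> (\<exists>u. ((v, u) \<in> E \<and> w \<le> \<beta> v u) \<or> ((u, v) \<in> E \<and> w \<le> \<beta> u v))"
  unfolding thr_verts_def by (auto simp: thr_edges_def image_iff)

lemma fin_out: "finite E \<Longrightarrow> finite {f v w |w. (v, w) \<in> E}"
proof -
  assume "finite E"
  then have "finite (snd ` E)" by simp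
  moreover have "{w. (v, w) \<in> E} \<subseteq> snd ` E" by force
  ultimately have "finite {w. (v, w) \<in> E}" by (rule finite_subset[rotated])
  then have "finite ((\<lambda>w. f v w) ` {w. (v, w) \<in> E})" by simp
  moreover have "{f v w |w. (v, w) \<in> E} = (\<lambda>w. f v w) ` {w. (v, w) \<in> E}" by auto
  ultimately show ?thesis by simp
qed

lemma fin_in: "finite E \<Longrightarrow> finite {f u v |u. (u, v) \<in> E}"
proof -
  assume "finite E"
  then have "finite (fst ` E)" by simp
  moreover have "{u. (u, v) \<in> E} \<subseteq> fst ` E" by force
  ultimately have "finite {u. (u, v) \<in> E}" by (rule finite_subset[rotated])
  then have "finite ((\<lambda>u. f u v) ` {u. (u, v) \<in> E})" by simp
  moreover have "{f u v |u. (u, v) \<in> E} = (\<lambda>u. f u v) ` {u. (u, v) \<in> E}" by auto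
  ultimately show ?thesis by simp
qed

lemma out_ge: "finite E \<Longrightarrow> (v, y) \<in> E \<Longrightarrow> f v y \<le> beta_out E f v"
  unfolding beta_out_def by (rule Max_ge[OF fin_out]) auto

lemma in_ge: "finite E \<Longrightarrow> (x, v) \<in> E \<Longrightarrow> f x v \<le> beta_in E f v"
  unfolding beta_in_def by (rule Max_ge[OF fin_in]) auto

lemma out_wit: "finite E \<Longrightarrow> (v, y0) \<in> E \<Longrightarrow> c \<le> beta_out E f v \<Longrightarrow> \<exists>y. (v, y) \<in> E \<and> c \<le> f v y"
  unfolding beta_out_def using Max_ge_iff[OF fin_out[of E f v]] by auto

lemma in_wit: "finite E \<Longrightarrow> (x0, v) \<in> E \<Longrightarrow> c \<le> beta_in E f v \<Longrightarrow> \<exists>x. (x, v) \<in> E \<and> c \<le> f x v"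
  unfolding beta_in_def using Max_ge_iff[OF fin_in[of E f v]] by auto

lemma out_le: "finite E \<Longrightarrow> (v, y0) \<in> E \<Longrightarrow> (\<And>y. (v, y) \<in> E \<Longrightarrow> f v y \<le> c) \<Longrightarrow> beta_out E f v \<le> c"
  unfolding beta_out_def using Max_le_iff[OF fin_out[of E f v]] by auto

lemma in_le: "finite E \<Longrightarrow> (x0, v) \<in> E \<Longrightarrow> (\<And>x. (x, v) \<in> E \<Longrightarrow> f x v \<le> c) \<Longrightarrow> beta_in E f v \<le> c"
  unfolding beta_in_def using Max_le_iff[OF fin_in[of E f v]] by auto

lemma rtrancl_change:
  assumes "(a, c) \<in> R\<^sup>*" "Q a" "\<not> Q c"
  shows "\<exists>x y. (x, y) \<in> R \<and> Q x \<and> \<not> Q y"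
  using assms by (induction rule: rtrancl_induct) auto

lemma rtrancl_const:
  assumes "(a, c) \<in> R\<^sup>*" "\<And>x y. (x, y) \<in> R \<Longrightarrow> p x = p y"
  shows "p a = p c"
  using assms by (induction rule: rtrancl_induct) auto

lemma has_edges:
  assumes EV: "E \<subseteq> V \<times> V" and sc: "strongly_connected V E" and ne: "E \<noteq> {}" and v: "v \<in> V"
  shows "\<exists>y. (v, y) \<in> E" "\<exists>x. (x, v) \<in> E"
proof -
  obtain a b where ab: "(a, b) \<in> E" using ne by auto
  then have aV: "a \<in> V" "b \<in> V" using EV by auto
  have "(v, a) \<in> E\<^sup>*" using sc v aV by (simp add: strongly_connected_def)
  then show "\<exists>y. (v, y) \<in> E" using ab by (cases rule: converse_rtranclE) auto
  have "(b, v) \<in> E\<^sup>*" using sc v aV by (simp add: strongly_connected_def)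
  then show "\<exists>x. (x, v) \<in> E" using ab by (cases rule: rtranclE) auto
qed

lemma uniq:
  assumes finV: "finite V" and EV: "E \<subseteq> V \<times> V" and sc: "strongly_connected V E"
    and balg: "balanced V E \<gamma>"
    and allsc: "\<forall>w. strongly_connected (thr_verts E \<beta> w) (thr_edges E \<beta> w)"
    and pot: "\<forall>(x, y)\<in>E. \<gamma> x y - \<beta> x y = p y - p x"
  shows "\<forall>(u, v)\<in>E. \<gamma> u v = \<beta> u v"
proof (rule ccontr)
  assume "\<not> (\<forall>(u, v)\<in>E. \<gamma> u v = \<beta> u v)"
  then obtain x0 y0 where e0: "(x0, y0) \<in> E" "\<gamma> x0 y0 \<noteq> \<beta> x0 y0" by auto
  have finE: "finite E" using finV EV finite_subset by (metis finite_SigmaI)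
  have Ene: "E \<noteq> {}" using e0 by auto
  have potE: "\<gamma> x y = \<beta> x y + (p y - p x)" if "(x, y) \<in> E" for x y using pot that by auto
  define D where "D = {e \<in> E. p (fst e) \<noteq> p (snd e)}"
  have finD: "finite D" using finE by (simp add: D_def)
  have e0D: "(x0, y0) \<in> D" using e0 potE[OF e0(1)] by (auto simp: D_def)
  have DE: "(x, y) \<in> D \<Longrightarrow> (x, y) \<in> E" for x y by (simp add: D_def)
  define b where "b = Max ((\<lambda>(x, y). \<beta> x y) ` D)"
  have bge: "\<beta> x y \<le> b" if "(x, y) \<in> D" for x y
    unfolding b_def using finD that by (intro Max_ge) force+
  obtain x1 y1 where x1D: "(x1, y1) \<in> D" and bx1: "\<beta> x1 y1 = b"
  proof -
    have "b \<in> (\<lambda>(x, y). \<beta> x y) ` D" unfolding b_def using finD e0D by (intro Max_in) auto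
    then show ?thesis using that by auto
  qed
  define Yb where "Yb = thr_verts E \<beta> b"
  have x1Y: "x1 \<in> Yb" "y1 \<in> Yb" using x1D bx1 DE unfolding Yb_def thr_verts_iff by (metis order_refl)+
  have YbV: "Yb \<subseteq> V" using EV unfolding Yb_def thr_verts_def thr_edges_def by auto
  have finYb: "finite Yb" using finV YbV finite_subset by auto
  define P where "P = Min (p ` Yb)"
  have Ple: "v \<in> Yb \<Longrightarrow> P \<le> p v" for v unfolding P_def using finYb by auto
  obtain xm where xm: "xm \<in> Yb" "p xm = P"
  proof -
    have "P \<in> p ` Yb" unfolding P_def using finYb x1Y by (intro Min_in) auto
    then show ?thesis using that by auto
  qed
  obtain z where z: "z \<in> Yb" "p z \<noteq> P"
    using x1Y x1D by (metis (mono_tags, lifting) D_def fst_conv mem_Collect_eq snd_conv)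
  have "(xm, z) \<in> (thr_edges E \<beta> b)\<^sup>*" using allsc xm z unfolding strongly_connected_def Yb_def by blast
  from rtrancl_change[OF this, of "\<lambda>v. p v = P"] xm z
  obtain a c where ac: "(a, c) \<in> thr_edges E \<beta> b" "p a = P" "p c \<noteq> P" by blast
  have acE: "(a, c) \<in> E" "b \<le> \<beta> a c" using ac by auto
  have cY: "c \<in> Yb" unfolding Yb_def thr_verts_iff using acE by blast
  have pc: "p c > P" using Ple[OF cY] ac by simp
  have acD: "(a, c) \<in> D" using acE ac by (simp add: D_def)
  have bac: "\<beta> a c = b" using bge[OF acD] acE by simp
  have gac: "\<gamma> a c > b" using potE[OF acE(1)] bac pc ac by simp
  define g where "g = Max ((\<lambda>(x, y). \<gamma> x y) ` D)"
  have gge: "\<gamma> x y \<le> g" if "(x, y) \<in> D" for x y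
    unfolding g_def using finD that by (intro Max_ge) force+
  have gb: "b < g" using gge[OF acD] gac by simp
  define F where "F = {e \<in> D. \<gamma> (fst e) (snd e) = g}"
  have finF: "finite F" using finD by (simp add: F_def)
  have Fne: "F \<noteq> {}"
  proof -
    have "g \<in> (\<lambda>(x, y). \<gamma> x y) ` D" unfolding g_def using finD e0D by (intro Max_in) auto
    then show ?thesis by (auto simp: F_def)
  qed
  have FD: "(s, t) \<in> F \<Longrightarrow> (s, t) \<in> D \<and> \<gamma> s t = g" for s t by (simp add: F_def)
  have Fp: "p s < p t" if "(s, t) \<in> F" for s t
  proof -
    have "(s, t) \<in> D" "\<gamma> s t = g" using FD[OF that] by auto
    then show ?thesis using bge[of s t] potE[of s t] DE gb by force
  qed
  have Fs: "s \<in> thr_verts E \<beta> g \<or> (\<exists>z. (z, s) \<in> F)" if "(s, t) \<in> F" for s t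
  proof -
    have stD: "(s, t) \<in> D" and gst: "\<gamma> s t = g" using FD[OF that] by auto
    have stE: "(s, t) \<in> E" using DE[OF stD] .
    have sV: "s \<in> V" using stE EV by auto
    have "g \<le> beta_out E \<gamma> s" using out_ge[OF finE stE, of \<gamma>] gst by simp
    then have "g \<le> beta_in E \<gamma> s" using balg sV by (simp add: balanced_def)
    moreover obtain x' where "(x', s) \<in> E" using has_edges(2)[OF EV sc Ene sV] by auto
    ultimately obtain z where zs: "(z, s) \<in> E" "g \<le> \<gamma> z s" using in_wit[OF finE] by blast
    show ?thesis
    proof (cases "p z = p s")
      case True
      then have "\<beta> z s = \<gamma> z s" using potE[OF zs(1)] by simp
      then show ?thesis using zs unfolding thr_verts_iff by auto
    next
      case False
      then have "(z, s) \<in> D" using zs by (simp add: D_def)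
      then have "(z, s) \<in> F" using gge[of z s] zs by (simp add: F_def)
      then show ?thesis by blast
    qed
  qed
  have Ft: "t \<in> thr_verts E \<beta> g \<or> (\<exists>r. (t, r) \<in> F)" if "(s, t) \<in> F" for s t
  proof -
    have stD: "(s, t) \<in> D" and gst: "\<gamma> s t = g" using FD[OF that] by auto
    have stE: "(s, t) \<in> E" using DE[OF stD] .
    have tV: "t \<in> V" using stE EV by auto
    have "g \<le> beta_in E \<gamma> t" using in_ge[OF finE stE, of \<gamma>] gst by simp
    then have "g \<le> beta_out E \<gamma> t" using balg tV by (simp add: balanced_def)
    moreover obtain y' where "(t, y') \<in> E" using has_edges(1)[OF EV sc Ene tV] by auto
    ultimately obtain r where rs: "(t, r) \<in> E" "g \<le> \<gamma> t r" using out_wit[OF finE] by blast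
    show ?thesis
    proof (cases "p t = p r")
      case True
      then have "\<beta> t r = \<gamma> t r" using potE[OF rs(1)] by simp
      then show ?thesis using rs unfolding thr_verts_iff by auto
    next
      case False
      then have "(t, r) \<in> D" using rs by (simp add: D_def)
      then have "(t, r) \<in> F" using gge[of t r] rs by (simp add: F_def)
      then show ?thesis by blast
    qed
  qed
  define ms where "ms = Min ((\<lambda>e. p (fst e)) ` F)"
  obtain s1 t1 where e1: "(s1, t1) \<in> F" "p s1 = ms"
  proof -
    have "ms \<in> (\<lambda>e. p (fst e)) ` F" unfolding ms_def using finF Fne by (intro Min_in) auto
    then show ?thesis using that by auto
  qed
  have msle: "(s, t) \<in> F \<Longrightarrow> ms \<le> p s" for s t unfolding ms_def using finF by (metis Min_le fst_conv image_eqI finite_imageI)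
  define mt where "mt = Max ((\<lambda>e. p (snd e)) ` F)"
  obtain s2 t2 where e2: "(s2, t2) \<in> F" "p t2 = mt"
  proof -
    have "mt \<in> (\<lambda>e. p (snd e)) ` F" unfolding mt_def using finF Fne by (intro Max_in) auto
    then show ?thesis using that by auto
  qed
  have mtge: "(s, t) \<in> F \<Longrightarrow> p t \<le> mt" for s t unfolding mt_def using finF by (metis Max_ge snd_conv image_eqI finite_imageI)
  have s1Y: "s1 \<in> thr_verts E \<beta> g"
  proof -
    { assume "\<exists>z. (z, s1) \<in> F"
      then obtain z where "(z, s1) \<in> F" by blast
      then have False using Fp msle e1 by fastforce }
    then show ?thesis using Fs[OF e1(1)] by blast
  qed
  have t2Y: "t2 \<in> thr_verts E \<beta> g"
  proof -
    { assume "\<exists>r. (t2, r) \<in> F"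
      then obtain r where "(t2, r) \<in> F" by blast
      then have False using Fp mtge e2 by fastforce }
    then show ?thesis using Ft[OF e2(1)] by blast
  qed
  have "(s1, t2) \<in> (thr_edges E \<beta> g)\<^sup>*" using allsc s1Y t2Y unfolding strongly_connected_def by blast
  then have "p s1 = p t2"
  proof (rule rtrancl_const)
    fix x y assume "(x, y) \<in> thr_edges E \<beta> g"
    then have xy: "(x, y) \<in> E" "g \<le> \<beta> x y" by auto
    show "p x = p y"
    proof (rule ccontr)
      assume "p x \<noteq> p y"
      then have "(x, y) \<in> D" using xy by (simp add: D_def)
      then show False using bge[of x y] xy gb by simp
    qed
  qed
  moreover have "p t1 \<le> p t2" using mtge[OF e1(1)] e2 by simp
  moreover have "p s1 < p t1" using Fp[OF e1(1)] .
  ultimately show False by simp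
qed



lemma sets_exist:
  assumes finV: "finite V" and EV: "E \<subseteq> V \<times> V" and sc: "strongly_connected V E"
    and bal: "balanced V E \<beta>"
    and nsc: "\<not> strongly_connected (thr_verts E \<beta> w) (thr_edges E \<beta> w)"
    and mdef: "m = (\<lambda>v. beta_out E \<beta> v)"
    and Odef: "Ox = {(x, y). (x, y) \<in> E \<and> \<beta> x y = m x}"
    and Idef: "Ix = {(x, y). (x, y) \<in> E \<and> \<beta> x y = m y}"
  shows "\<exists>A A'. A \<subseteq> V \<and> A' \<subseteq> V \<and> A \<inter> A' = {} \<and> A \<noteq> {} \<and> A' \<noteq> {}
     \<and> (\<forall>v\<in>A. \<forall>y. (v, y) \<in> Ox \<longrightarrow> y \<in> A) \<and> (\<forall>v\<in>A. \<exists>x\<in>A. (x, v) \<in> Ix)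
     \<and> (\<forall>v\<in>A'. \<forall>x. (x, v) \<in> Ix \<longrightarrow> x \<in> A') \<and> (\<forall>v\<in>A'. \<exists>y\<in>A'. (v, y) \<in> Ox)"
proof -
  define H where "H = thr_edges E \<beta> w"
  define Y where "Y = thr_verts E \<beta> w"
  obtain x0 y0 where xy0: "x0 \<in> Y" "y0 \<in> Y" "(x0, y0) \<notin> H\<^sup>*"
    using nsc unfolding strongly_connected_def H_def Y_def by blast
  have finE: "finite E" using finV EV finite_subset by (metis finite_SigmaI)
  have Ene: "E \<noteq> {}" using xy0(1) unfolding Y_def thr_verts_iff by auto
  have inm: "beta_in E \<beta> v = m v" if "v \<in> V" for v using bal that by (simp add: balanced_def mdef)
  have le1: "\<beta> x y \<le> m x" if "(x, y) \<in> E" for x y using out_ge[OF finE that] by (simp add: mdef)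
  have le2: "\<beta> x y \<le> m y" if "(x, y) \<in> E" for x y using in_ge[OF finE that, of \<beta>] inm[of y] that EV by auto
  have Oex: "\<exists>y. (v, y) \<in> Ox" if vV: "v \<in> V" for v
  proof -
    obtain y0 where "(v, y0) \<in> E" using has_edges(1)[OF EV sc Ene vV] by blast
    from out_wit[OF finE this, of "m v" \<beta>] obtain y where "(v, y) \<in> E" "m v \<le> \<beta> v y" by (auto simp: mdef)
    then show ?thesis using le1 by (intro exI[of _ y]) (force simp: Odef)
  qed
  have Iex: "\<exists>x. (x, v) \<in> Ix" if vV: "v \<in> V" for v
  proof -
    obtain x0 where "(x0, v) \<in> E" using has_edges(2)[OF EV sc Ene vV] by blast
    from in_wit[OF finE this, of "m v" \<beta>] obtain x where "(x, v) \<in> E" "m v \<le> \<beta> x v" using inm[OF vV] by auto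
    then show ?thesis using le2 by (intro exI[of _ x]) (force simp: Idef)
  qed
  have OE: "(x, y) \<in> Ox \<Longrightarrow> (x, y) \<in> E" for x y by (simp add: Odef)
  have IE: "(x, y) \<in> Ix \<Longrightarrow> (x, y) \<in> E" for x y by (simp add: Idef)
  have Om: "m x \<le> m y" if "(x, y) \<in> Ox\<^sup>*" for x y
    using that proof (induction rule: rtrancl_induct)
    case (step y z) then show ?case using le2[OF OE[OF step(2)]] step(2) by (auto simp: Odef)
  qed simp
  have Im: "m y \<le> m x" if "(x, y) \<in> Ix\<^sup>*" for x y
    using that proof (induction rule: rtrancl_induct)
    case (step y z) then show ?case using le1[OF IE[OF step(2)]] step(2) by (auto simp: Idef)
  qed simp
  have YV: "v \<in> Y \<Longrightarrow> v \<in> V" for v using EV unfolding Y_def thr_verts_iff by auto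
  have Ym: "w \<le> m v" if "v \<in> Y" for v
  proof -
    from that obtain u where "((v, u) \<in> E \<and> w \<le> \<beta> v u) \<or> ((u, v) \<in> E \<and> w \<le> \<beta> u v)"
      unfolding Y_def thr_verts_iff by blast
    then show ?thesis using le1 le2 by force
  qed
  define X where "X = {v. (x0, v) \<in> H\<^sup>*}"
  have HY: "(x, y) \<in> H \<Longrightarrow> x \<in> Y \<and> y \<in> Y" for x y
    unfolding H_def Y_def thr_verts_iff by auto
  have XY: "X \<subseteq> Y"
  proof
    fix v assume "v \<in> X"
    then have "(x0, v) \<in> H\<^sup>*" by (simp add: X_def)
    then show "v \<in> Y" using xy0(1) HY by (cases rule: rtranclE) auto
  qed
  have Xcl: "y \<in> X" if "v \<in> X" "(v, y) \<in> Ox" for v y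
  proof -
    have "w \<le> m v" using Ym XY that(1) by auto
    then have "(v, y) \<in> H" using that(2) by (auto simp: Odef H_def)
    then show ?thesis using that(1) by (auto simp: X_def)
  qed
  define Z where "Z = Y - X"
  have y0Z: "y0 \<in> Z" using xy0 by (simp add: Z_def X_def)
  have Zcl: "x \<in> Z" if "z \<in> Z" "(x, z) \<in> Ix" for x z
  proof -
    have "w \<le> m z" using Ym that(1) by (auto simp: Z_def)
    then have xzH: "(x, z) \<in> H" using that(2) by (auto simp: Idef H_def)
    then have "x \<in> Y" using HY by blast
    moreover have "x \<notin> X" using xzH that(1) by (auto simp: Z_def X_def intro: rtrancl_into_rtrancl)
    ultimately show ?thesis by (simp add: Z_def)
  qed
  have finY: "finite Y" using YV finV by (meson finite_subset subsetI)
  define R where "R u = {v. (u, v) \<in> Ox\<^sup>*}" for u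
  have RX: "R u \<subseteq> X" if "u \<in> X" for u
  proof
    fix v assume "v \<in> R u"
    then have "(u, v) \<in> Ox\<^sup>*" by (simp add: R_def)
    then show "v \<in> X" using that by (induction rule: rtrancl_induct) (auto intro: Xcl)
  qed
  have x0X: "x0 \<in> X" by (simp add: X_def)
  obtain u where u: "u \<in> X" "\<And>y. y \<in> X \<Longrightarrow> card (R u) \<le> card (R y)"
    using ex_has_least_nat[of "\<lambda>u. u \<in> X" x0 "\<lambda>u. card (R u)"] x0X by blast
  define A where "A = R u"
  have AX: "A \<subseteq> X" using RX u(1) by (simp add: A_def)
  have finR: "finite (R v)" if "v \<in> X" for v using RX[OF that] XY finY by (meson finite_subset)
  have A3: "(v, u) \<in> Ox\<^sup>*" if "v \<in> A" for v
  proof -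
    have sub: "R v \<subseteq> R u" using that unfolding A_def R_def by (auto intro: rtrancl_trans)
    have "v \<in> X" using AX that by auto
    then have "card (R u) \<le> card (R v)" using u(2) by blast
    then have "card (R v) = card (R u)" using card_mono[OF finR[OF u(1)] sub] by linarith
    then have "R v = R u" by (rule card_subset_eq[OF finR[OF u(1)] sub])
    then show ?thesis by (auto simp: R_def)
  qed
  have A1: "y \<in> A" if "v \<in> A" "(v, y) \<in> Ox" for v y
    using that by (auto simp: A_def R_def)
  have A2: "\<exists>x\<in>A. (x, v) \<in> Ix" if vA: "v \<in> A" for v
  proof -
    have vV: "v \<in> V" using vA AX XY YV by auto
    obtain y where vy: "(v, y) \<in> Ox" using Oex[OF vV] by blast
    have yA: "y \<in> A" using A1[OF vA vy] .
    have uv: "(u, v) \<in> Ox\<^sup>*" using vA by (simp add: A_def R_def)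
    have "(y, v) \<in> Ox\<^sup>*" using A3[OF yA] uv by simp
    then show ?thesis
    proof (cases rule: rtranclE)
      case base
      then have "(v, v) \<in> Ox" using vy by simp
      then show ?thesis using vA by (auto simp: Odef Idef)
    next
      case (step x)
      have xA: "x \<in> A" using yA step(1) by (auto simp: A_def R_def intro: rtrancl_trans)
      have "m x \<le> m v" using Om step(2) by blast
      moreover have "m v \<le> m x" using Om[of v x] vy step(1) by (meson converse_rtrancl_into_rtrancl)
      ultimately have "(x, v) \<in> Ix" using step(2) by (auto simp: Odef Idef)
      then show ?thesis using xA by blast
    qed
  qed
  define R' where "R' u = {v. (v, u) \<in> Ix\<^sup>*}" for u
  have R'Z: "R' u \<subseteq> Z" if "u \<in> Z" for u
  proof
    fix v assume "v \<in> R' u"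
    then have "(v, u) \<in> Ix\<^sup>*" by (simp add: R'_def)
    then show "v \<in> Z" using that by (induction rule: converse_rtrancl_induct) (auto intro: Zcl)
  qed
  obtain u' where u': "u' \<in> Z" "\<And>y. y \<in> Z \<Longrightarrow> card (R' u') \<le> card (R' y)"
    using ex_has_least_nat[of "\<lambda>u. u \<in> Z" y0 "\<lambda>u. card (R' u)"] y0Z by blast
  define A' where "A' = R' u'"
  have A'Z: "A' \<subseteq> Z" using R'Z u'(1) by (simp add: A'_def)
  have finR': "finite (R' v)" if "v \<in> Z" for v using R'Z[OF that] finY unfolding Z_def by (meson finite_subset Diff_subset subset_trans)
  have A'3: "(u', v) \<in> Ix\<^sup>*" if "v \<in> A'" for v
  proof -
    have sub: "R' v \<subseteq> R' u'" using that unfolding A'_def R'_def by (auto intro: rtrancl_trans)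
    have "v \<in> Z" using A'Z that by auto
    then have "card (R' u') \<le> card (R' v)" using u'(2) by blast
    then have "card (R' v) = card (R' u')" using card_mono[OF finR'[OF u'(1)] sub] by linarith
    then have "R' v = R' u'" by (rule card_subset_eq[OF finR'[OF u'(1)] sub])
    then show ?thesis by (auto simp: R'_def)
  qed
  have A'1: "x \<in> A'" if "v \<in> A'" "(x, v) \<in> Ix" for v x
    using that by (auto simp: A'_def R'_def)
  have A'2: "\<exists>y\<in>A'. (v, y) \<in> Ox" if vA: "v \<in> A'" for v
  proof -
    have vV: "v \<in> V" using vA A'Z YV by (auto simp: Z_def)
    obtain x where xv: "(x, v) \<in> Ix" using Iex[OF vV] by blast
    have xA: "x \<in> A'" using A'1[OF vA xv] .
    have vu: "(v, u') \<in> Ix\<^sup>*" using vA by (simp add: A'_def R'_def)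
    have "(v, x) \<in> Ix\<^sup>*" using A'3[OF xA] vu by simp
    then show ?thesis
    proof (cases rule: converse_rtranclE)
      case base
      then have "(v, v) \<in> Ix" using xv by simp
      then show ?thesis using vA by (auto simp: Odef Idef)
    next
      case (step y)
      have yA: "y \<in> A'"
      proof -
        have "(y, v) \<in> Ix\<^sup>*" using step(2) xv by simp
        then have "(y, u') \<in> Ix\<^sup>*" using vu by simp
        then show ?thesis by (simp add: A'_def R'_def)
      qed
      have "m y \<le> m v" using Im step(1) by blast
      moreover have "m v \<le> m y" using Im[of y v] step(2) xv by (meson rtrancl.rtrancl_into_rtrancl)
      ultimately have "(v, y) \<in> Ox" using step(1) by (auto simp: Odef Idef)
      then show ?thesis using yA by blast
    qed
  qed
  show ?thesis
  proof (rule exI[of _ A], rule exI[of _ A'], intro conjI)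
    show "A \<subseteq> V" using AX XY YV by auto
    show "A' \<subseteq> V" using A'Z YV by (auto simp: Z_def)
    show "A \<inter> A' = {}" using AX A'Z by (auto simp: Z_def)
    show "A \<noteq> {}" by (auto simp: A_def R_def)
    show "A' \<noteq> {}" by (auto simp: A'_def R'_def)
    show "\<forall>v\<in>A. \<forall>y. (v, y) \<in> Ox \<longrightarrow> y \<in> A" using A1 by blast
    show "\<forall>v\<in>A. \<exists>x\<in>A. (x, v) \<in> Ix" using A2 by blast
    show "\<forall>v\<in>A'. \<forall>x. (x, v) \<in> Ix \<longrightarrow> x \<in> A'" using A'1 by blast
    show "\<forall>v\<in>A'. \<exists>y\<in>A'. (v, y) \<in> Ox" using A'2 by blast
  qed
qed



lemma kt_fixpoint:
  fixes T :: "('a \<Rightarrow> real) \<Rightarrow> 'a \<Rightarrow> real"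
  assumes mono: "\<And>q1 q2 v. (\<forall>x\<in>V. q1 x \<le> q2 x) \<Longrightarrow> v \<in> V \<Longrightarrow> T q1 v \<le> T q2 v"
    and lh: "\<forall>v\<in>V. l v \<le> h v" and lT: "\<forall>v\<in>V. l v \<le> T l v" and hT: "\<forall>v\<in>V. T h v \<le> h v"
  shows "\<exists>f. \<forall>v\<in>V. l v \<le> f v \<and> f v \<le> h v \<and> T f v = f v"
proof -
  define S where "S = {q. \<forall>v\<in>V. l v \<le> q v \<and> q v \<le> h v \<and> q v \<le> T q v}"
  define f where "f v = Sup {q v | q. q \<in> S}" for v
  have lS: "l \<in> S" using lh lT by (simp add: S_def)
  have ne: "{q v | q. q \<in> S} \<noteq> {}" for v using lS by blast
  have bdd: "bdd_above {q v | q. q \<in> S}" if "v \<in> V" for v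
    using that by (intro bdd_aboveI[of _ "h v"]) (auto simp: S_def)
  have up: "q v \<le> f v" if "q \<in> S" "v \<in> V" for q v
    unfolding f_def using that bdd by (intro cSup_upper) auto
  have fh: "f v \<le> h v" if "v \<in> V" for v
    unfolding f_def using that ne by (intro cSup_least) (auto simp: S_def)
  have lf: "l v \<le> f v" if "v \<in> V" for v using up[OF lS that] .
  have fT: "f v \<le> T f v" if "v \<in> V" for v
  proof -
  have "Sup {q v | q. q \<in> S} \<le> T f v"
  proof (rule cSup_least[OF ne])
    fix x assume "x \<in> {q v |q. q \<in> S}"
    then obtain q where q: "q \<in> S" "x = q v" by blast
    have "q v \<le> T q v" using q that by (simp add: S_def)
    also have "\<dots> \<le> T f v" using mono[of q f v] up[OF q(1)] that by blast
    finally show "x \<le> T f v" using q by simp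
  qed
  then show ?thesis by (simp add: f_def[of v])
  qed
  have TfS: "T f \<in> S" unfolding S_def
  proof (intro CollectI ballI conjI)
    fix v assume v: "v \<in> V"
    show "l v \<le> T f v" using lT v mono[of l f v] lf by fastforce
    show "T f v \<le> h v" using hT v mono[of f h v] fh by fastforce
    show "T f v \<le> T (T f) v" using mono[of f "T f" v] fT v by blast
  qed
  have "T f v = f v" if "v \<in> V" for v using up[OF TfS that] fT[OF that] by simp
  then show ?thesis using lf fh by blast
qed



lemma Max_mono_img:
  fixes f g :: "'a \<Rightarrow> real"
  assumes "finite S" "S \<noteq> {}" "\<And>x. x \<in> S \<Longrightarrow> f x \<le> g x"
  shows "Max (f ` S) \<le> Max (g ` S)"
proof -
  have "\<forall>y\<in>f ` S. y \<le> Max (g ` S)"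
  proof
    fix y assume "y \<in> f ` S"
    then obtain x where x: "x \<in> S" "y = f x" by blast
    have "g x \<le> Max (g ` S)" using assms(1) x(1) by simp
    then show "y \<le> Max (g ` S)" using assms(3)[OF x(1)] x(2) by simp
  qed
  then show ?thesis using assms(1,2) by simp
qed

lemma Min_mono_img:
  fixes f g :: "'a \<Rightarrow> real"
  assumes "finite S" "S \<noteq> {}" "\<And>x. x \<in> S \<Longrightarrow> f x \<le> g x"
  shows "Min (f ` S) \<le> Min (g ` S)"
proof -
  have "\<forall>y\<in>g ` S. Min (f ` S) \<le> y"
  proof
    fix y assume "y \<in> g ` S"
    then obtain x where x: "x \<in> S" "y = g x" by blast
    have "Min (f ` S) \<le> f x" using assms(1) x(1) by simp
    then show "Min (f ` S) \<le> y" using assms(3)[OF x(1)] x(2) by simp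
  qed
  then show ?thesis using assms(1,2) by simp
qed

lemma nonuniq:
  assumes finV: "finite V" and EV: "E \<subseteq> V \<times> V" and sc: "strongly_connected V E"
    and bal: "balanced V E \<beta>"
    and nsc: "\<not> strongly_connected (thr_verts E \<beta> w) (thr_edges E \<beta> w)"
  shows "\<exists>\<gamma>. balanced V E \<gamma> \<and> equivalent E \<gamma> \<beta> \<and> \<not> (\<forall>(u, v)\<in>E. \<gamma> u v = \<beta> u v)"
proof -
  define m where "m = (\<lambda>v. beta_out E \<beta> v)"
  define Ox where "Ox = {(x, y). (x, y) \<in> E \<and> \<beta> x y = m x}"
  define Ix where "Ix = {(x, y). (x, y) \<in> E \<and> \<beta> x y = m y}"
  obtain A A' where AA: "A \<subseteq> V" "A' \<subseteq> V" "A \<inter> A' = {}" "A \<noteq> {}" "A' \<noteq> {}"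
    and A1: "\<forall>v\<in>A. \<forall>y. (v, y) \<in> Ox \<longrightarrow> y \<in> A" and A2: "\<forall>v\<in>A. \<exists>x\<in>A. (x, v) \<in> Ix"
    and A'1: "\<forall>v\<in>A'. \<forall>x. (x, v) \<in> Ix \<longrightarrow> x \<in> A'" and A'2: "\<forall>v\<in>A'. \<exists>y\<in>A'. (v, y) \<in> Ox"
    using sets_exist[OF finV EV sc bal nsc m_def Ox_def Ix_def] by blast
  have finE: "finite E" using finV EV finite_subset by (metis finite_SigmaI)
  obtain u where uA: "u \<in> A" using AA by blast
  obtain u' where uA': "u' \<in> A'" using AA by blast
  have Ene: "E \<noteq> {}" using A2 uA by (auto simp: Ix_def)
  have inm: "beta_in E \<beta> v = m v" if "v \<in> V" for v using bal that by (simp add: balanced_def m_def)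
  have le1: "\<beta> x y \<le> m x" if "(x, y) \<in> E" for x y using out_ge[OF finE that] by (simp add: m_def)
  have le2: "\<beta> x y \<le> m y" if "(x, y) \<in> E" for x y using in_ge[OF finE that, of \<beta>] inm[of y] that EV by auto
  define CI where "CI v = {x. (x, v) \<in> Ix}" for v
  define CO where "CO v = {y. (v, y) \<in> Ox}" for v
  have CIV: "CI v \<subseteq> V" for v using EV by (auto simp: CI_def Ix_def)
  have COV: "CO v \<subseteq> V" for v using EV by (auto simp: CO_def Ox_def)
  have finCI: "finite (CI v)" for v using CIV finV finite_subset by blast
  have finCO: "finite (CO v)" for v using COV finV finite_subset by blast
  have COne: "CO v \<noteq> {}" if vV: "v \<in> V" for v
  proof -
    obtain y0 where "(v, y0) \<in> E" using has_edges(1)[OF EV sc Ene vV] by blast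
    from out_wit[OF finE this, of "m v" \<beta>] obtain y where "(v, y) \<in> E" "m v \<le> \<beta> v y" by (auto simp: m_def)
    then have "y \<in> CO v" using le1 by (force simp: CO_def Ox_def)
    then show ?thesis by blast
  qed
  have CIne: "CI v \<noteq> {}" if vV: "v \<in> V" for v
  proof -
    obtain x0 where "(x0, v) \<in> E" using has_edges(2)[OF EV sc Ene vV] by blast
    from in_wit[OF finE this, of "m v" \<beta>] obtain x where "(x, v) \<in> E" "m v \<le> \<beta> x v" using inm[OF vV] by auto
    then have "x \<in> CI v" using le2 by (force simp: CI_def Ix_def)
    then show ?thesis by blast
  qed
  define iA where "iA v = (if v \<in> A then 1 else 0 :: real)" for v
  define iB where "iB v = (if v \<in> A' then 0 else 1 :: real)" for v
  define T where "T q v = (Max (q ` CI v) + Min (q ` CO v)) / 2" for q :: "'a \<Rightarrow> real" and v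
  have mono: "T q1 v \<le> T q2 v" if "\<forall>x\<in>V. q1 x \<le> q2 x" "v \<in> V" for q1 q2 v
  proof -
    have "Max (q1 ` CI v) \<le> Max (q2 ` CI v)"
      using Max_mono_img[OF finCI CIne[OF that(2)]] that(1) CIV by blast
    moreover have "Min (q1 ` CO v) \<le> Min (q2 ` CO v)"
      using Min_mono_img[OF finCO COne[OF that(2)]] that(1) COV by blast
    ultimately show ?thesis by (simp add: T_def)
  qed
  have lh: "\<forall>v\<in>V. iA v \<le> iB v" using AA by (auto simp: iA_def iB_def)
  have iA01: "0 \<le> iA x \<and> iA x \<le> 1" for x by (simp add: iA_def)
  have iB01: "0 \<le> iB x \<and> iB x \<le> 1" for x by (simp add: iB_def)
  have lT: "\<forall>v\<in>V. iA v \<le> T iA v"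
  proof
    fix v assume vV: "v \<in> V"
    obtain x0 where x0: "x0 \<in> CI v" using CIne[OF vV] by blast
    have M0: "0 \<le> Max (iA ` CI v)"
      using iA01[of x0] Max_ge[OF finite_imageI[OF finCI] imageI[OF x0, of iA]] by linarith
    have N0: "0 \<le> Min (iA ` CO v)" using finCO COne[OF vV] iA01 by simp
    show "iA v \<le> T iA v"
    proof (cases "v \<in> A")
      case True
      then obtain x where xA: "x \<in> A" and xC: "x \<in> CI v" using A2 by (auto simp: CI_def)
      have "iA x \<le> Max (iA ` CI v)" using Max_ge[OF finite_imageI[OF finCI] imageI[OF xC, of iA]] .
      then have "1 \<le> Max (iA ` CI v)" using xA by (simp add: iA_def)
      moreover have "\<forall>y\<in>CO v. 1 \<le> iA y" using A1 True by (auto simp: iA_def CO_def)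
      then have "1 \<le> Min (iA ` CO v)" using finCO COne[OF vV] by simp
      ultimately show ?thesis using True by (simp add: T_def iA_def)
    next
      case False then show ?thesis using M0 N0 by (simp add: T_def iA_def)
    qed
  qed
  have hT: "\<forall>v\<in>V. T iB v \<le> iB v"
  proof
    fix v assume vV: "v \<in> V"
    obtain y0 where y0: "y0 \<in> CO v" using COne[OF vV] by blast
    have M1: "Max (iB ` CI v) \<le> 1" using finCI CIne[OF vV] iB01 by simp
    have N1: "Min (iB ` CO v) \<le> 1"
      using iB01[of y0] Min_le[OF finite_imageI[OF finCO] imageI[OF y0, of iB]] by linarith
    show "T iB v \<le> iB v"
    proof (cases "v \<in> A'")
      case True
      then obtain y where yA: "y \<in> A'" and yC: "y \<in> CO v" using A'2 by (auto simp: CO_def)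
      have "Min (iB ` CO v) \<le> iB y" using Min_le[OF finite_imageI[OF finCO] imageI[OF yC, of iB]] .
      then have "Min (iB ` CO v) \<le> 0" using yA by (simp add: iB_def)
      moreover have "\<forall>x\<in>CI v. iB x \<le> 0" using A'1 True by (auto simp: iB_def CI_def)
      then have "Max (iB ` CI v) \<le> 0" using finCI CIne[OF vV] by simp
      ultimately show ?thesis using True by (simp add: T_def iB_def)
    next
      case False then show ?thesis using M1 N1 by (simp add: T_def iB_def)
    qed
  qed
  have kt: "\<exists>f. \<forall>v\<in>V. iA v \<le> f v \<and> f v \<le> iB v \<and> T f v = f v"
    by (rule kt_fixpoint[of V T iA iB, OF mono lh lT hT])
  then obtain f where f: "\<forall>v\<in>V. iA v \<le> f v \<and> f v \<le> iB v \<and> T f v = f v" by (elim exE)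
  have f01: "0 \<le> f v \<and> f v \<le> 1" if "v \<in> V" for v
  proof -
    have "iA v \<le> f v" "f v \<le> iB v" using f that by auto
    then show ?thesis using iA01[of v] iB01[of v] by linarith
  qed
  have uV: "u \<in> V" and u'V: "u' \<in> V" using uA uA' AA by auto
  have fu: "f u = 1"
  proof -
    have "iA u \<le> f u" "f u \<le> iB u" using f uV by auto
    moreover have "iA u = 1" "iB u = 1" using uA AA by (auto simp: iA_def iB_def)
    ultimately show ?thesis by linarith
  qed
  have fu': "f u' = 0"
  proof -
    have "iA u' \<le> f u'" "f u' \<le> iB u'" using f u'V by auto
    moreover have "iA u' = 0" "iB u' = 0" using uA' AA by (auto simp: iA_def iB_def)
    ultimately show ?thesis by linarith
  qed
  have fixp: "Max (f ` CI v) + Min (f ` CO v) = 2 * f v" if "v \<in> V" for v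
    using f that by (simp add: T_def)
  define G where "G = {m y - \<beta> x y | x y. (x, y) \<in> E \<and> \<beta> x y \<noteq> m y}
      \<union> {m x - \<beta> x y | x y. (x, y) \<in> E \<and> \<beta> x y \<noteq> m x} \<union> {1}"
  have finG: "finite G"
  proof -
    have "{m y - \<beta> x y | x y. (x, y) \<in> E \<and> \<beta> x y \<noteq> m y} \<subseteq> (\<lambda>(x, y). m y - \<beta> x y) ` E" by force
    moreover have "{m x - \<beta> x y | x y. (x, y) \<in> E \<and> \<beta> x y \<noteq> m x} \<subseteq> (\<lambda>(x, y). m x - \<beta> x y) ` E" by force
    ultimately show ?thesis unfolding G_def using finE by (meson finite_Un finite_imageI finite_insert finite.emptyI finite_subset)
  qed
  have Gpos: "\<forall>g\<in>G. 0 < g" unfolding G_def using le1 le2 by force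
  define \<epsilon> where "\<epsilon> = Min G / 3"
  have epos: "0 < \<epsilon>" using finG Gpos by (simp add: \<epsilon>_def G_def)
  have gap1: "\<beta> x y + 3 * \<epsilon> \<le> m y" if "(x, y) \<in> E" "\<beta> x y \<noteq> m y" for x y
  proof -
    have "m y - \<beta> x y \<in> G" unfolding G_def using that by blast
    then have "Min G \<le> m y - \<beta> x y" using finG by simp
    then show ?thesis by (simp add: \<epsilon>_def)
  qed
  have gap2: "\<beta> x y + 3 * \<epsilon> \<le> m x" if "(x, y) \<in> E" "\<beta> x y \<noteq> m x" for x y
  proof -
    have "m x - \<beta> x y \<in> G" unfolding G_def using that by blast
    then have "Min G \<le> m x - \<beta> x y" using finG by simp
    then show ?thesis by (simp add: \<epsilon>_def)
  qed
  define \<gamma> where "\<gamma> x y = \<beta> x y + \<epsilon> * (f x - f y)" for x y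
  have bnd: "-\<epsilon> \<le> \<epsilon> * t \<and> \<epsilon> * t \<le> \<epsilon>" if "-1 \<le> t" "t \<le> 1" for t
  proof -
    have "\<epsilon> * (-1) \<le> \<epsilon> * t" using that epos by (intro mult_left_mono) auto
    moreover have "\<epsilon> * t \<le> \<epsilon> * 1" using that epos by (intro mult_left_mono) auto
    ultimately show ?thesis by simp
  qed
  have bin: "beta_in E \<gamma> v = m v + \<epsilon> * (Max (f ` CI v) - f v)" if vV: "v \<in> V" for v
  proof (rule antisym)
    obtain x0 where x0: "(x0, v) \<in> E" using has_edges(2)[OF EV sc Ene vV] by blast
    have Mf: "0 \<le> Max (f ` CI v) \<and> Max (f ` CI v) \<le> 1"
      using finCI CIne[OF vV] f01 CIV by (simp add: Max_ge_iff) blast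
    show "beta_in E \<gamma> v \<le> m v + \<epsilon> * (Max (f ` CI v) - f v)"
    proof (rule in_le[OF finE x0])
      fix x assume xv: "(x, v) \<in> E"
      have xV: "x \<in> V" using xv EV by auto
      show "\<gamma> x v \<le> m v + \<epsilon> * (Max (f ` CI v) - f v)"
      proof (cases "\<beta> x v = m v")
        case True
        then have "x \<in> CI v" using xv by (simp add: CI_def Ix_def)
        then have "f x \<le> Max (f ` CI v)" using finCI by simp
        then have "\<epsilon> * (f x - f v) \<le> \<epsilon> * (Max (f ` CI v) - f v)" using epos by (simp add: mult_left_mono)
        then show ?thesis using True by (simp add: \<gamma>_def)
      next
        case False
        have "\<beta> x v + 3 * \<epsilon> \<le> m v" using gap1[OF xv False] .
        moreover have "\<epsilon> * (f x - f v) \<le> \<epsilon>" using bnd[of "f x - f v"] f01[OF xV] f01[OF vV] by simp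
        moreover have "-\<epsilon> \<le> \<epsilon> * (Max (f ` CI v) - f v)" using bnd[of "Max (f ` CI v) - f v"] Mf f01[OF vV] by simp
        ultimately show ?thesis using epos unfolding \<gamma>_def by linarith
      qed
    qed
    obtain x where x: "x \<in> CI v" "f x = Max (f ` CI v)"
    proof -
      have "Max (f ` CI v) \<in> f ` CI v" using finCI CIne[OF vV] by (intro Max_in) auto
      then show ?thesis using that by auto
    qed
    have xv: "(x, v) \<in> E" "\<beta> x v = m v" using x(1) by (auto simp: CI_def Ix_def)
    have "\<gamma> x v \<le> beta_in E \<gamma> v" using in_ge[OF finE xv(1)] .
    then show "m v + \<epsilon> * (Max (f ` CI v) - f v) \<le> beta_in E \<gamma> v" using xv x by (simp add: \<gamma>_def)
  qed
  have bout: "beta_out E \<gamma> v = m v + \<epsilon> * (f v - Min (f ` CO v))" if vV: "v \<in> V" for v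
  proof (rule antisym)
    obtain y0 where y0: "(v, y0) \<in> E" using has_edges(1)[OF EV sc Ene vV] by blast
    have Nf: "0 \<le> Min (f ` CO v) \<and> Min (f ` CO v) \<le> 1"
      using finCO COne[OF vV] f01 COV by (simp add: Min_le_iff) blast
    show "beta_out E \<gamma> v \<le> m v + \<epsilon> * (f v - Min (f ` CO v))"
    proof (rule out_le[OF finE y0])
      fix y assume vy: "(v, y) \<in> E"
      have yV: "y \<in> V" using vy EV by auto
      show "\<gamma> v y \<le> m v + \<epsilon> * (f v - Min (f ` CO v))"
      proof (cases "\<beta> v y = m v")
        case True
        then have "y \<in> CO v" using vy by (simp add: CO_def Ox_def)
        then have "Min (f ` CO v) \<le> f y" using finCO by simp
        then have "\<epsilon> * (f v - f y) \<le> \<epsilon> * (f v - Min (f ` CO v))" using epos by (simp add: mult_left_mono)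
        then show ?thesis using True by (simp add: \<gamma>_def)
      next
        case False
        have "\<beta> v y + 3 * \<epsilon> \<le> m v" using gap2[OF vy False] .
        moreover have "\<epsilon> * (f v - f y) \<le> \<epsilon>" using bnd[of "f v - f y"] f01[OF yV] f01[OF vV] by simp
        moreover have "-\<epsilon> \<le> \<epsilon> * (f v - Min (f ` CO v))" using bnd[of "f v - Min (f ` CO v)"] Nf f01[OF vV] by simp
        ultimately show ?thesis using epos unfolding \<gamma>_def by linarith
      qed
    qed
    obtain y where y: "y \<in> CO v" "f y = Min (f ` CO v)"
    proof -
      have "Min (f ` CO v) \<in> f ` CO v" using finCO COne[OF vV] by (intro Min_in) auto
      then show ?thesis using that by auto
    qed
    have vy: "(v, y) \<in> E" "\<beta> v y = m v" using y(1) by (auto simp: CO_def Ox_def)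
    have "\<gamma> v y \<le> beta_out E \<gamma> v" using out_ge[OF finE vy(1)] .
    then show "m v + \<epsilon> * (f v - Min (f ` CO v)) \<le> beta_out E \<gamma> v" using vy y by (simp add: \<gamma>_def)
  qed
  have balg: "balanced V E \<gamma>"
    unfolding balanced_def
  proof
    fix v assume vV: "v \<in> V"
    have "Max (f ` CI v) - f v = f v - Min (f ` CO v)" using fixp[OF vV] by simp
    then show "beta_in E \<gamma> v = beta_out E \<gamma> v" using bin[OF vV] bout[OF vV] by simp
  qed
  have eqv: "equivalent E \<gamma> \<beta>"
    unfolding equivalent_def
  proof (intro allI impI)
    fix vs assume dc: "directed_cycle E vs"
    then have vne: "vs \<noteq> []" by (simp add: directed_cycle_def)
    have fe: "(\<lambda>u v. \<gamma> u v - \<beta> u v) = (\<lambda>x y. (\<epsilon> * f x) - (\<epsilon> * f y))"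
      by (simp add: fun_eq_iff \<gamma>_def algebra_simps)
    show "cycle_sum (\<lambda>u v. \<gamma> u v - \<beta> u v) vs = 0"
      unfolding fe cycle_sum_psum[OF vne] using psum_tele[of "vs @ [hd vs]" "\<lambda>x. \<epsilon> * f x"] vne by simp
  qed
  have neq: "\<not> (\<forall>(x, y)\<in>E. \<gamma> x y = \<beta> x y)"
  proof
    assume all: "\<forall>(x, y)\<in>E. \<gamma> x y = \<beta> x y"
    have "(u, u') \<in> E\<^sup>*" using sc uA uA' AA by (auto simp: strongly_connected_def)
    from rtrancl_change[OF this, of "\<lambda>v. f v = 1"] fu fu'
    obtain a c where ac: "(a, c) \<in> E" "f a = 1" "f c \<noteq> 1" by auto
    then have "\<gamma> a c \<noteq> \<beta> a c" using epos by (simp add: \<gamma>_def)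
    then show False using all ac by auto
  qed
  show ?thesis using balg eqv neq by blast
qed

theorem theorem1:
  fixes V :: "'a set" and E :: "('a \<times> 'a) set" and \<beta> :: "'a \<Rightarrow> 'a \<Rightarrow> real"
  assumes "finite V"
    and "E \<subseteq> V \<times> V"
    and "strongly_connected V E"
    and "balanced V E \<beta>"
  shows "(\<forall>\<gamma>. balanced V E \<gamma> \<and> equivalent E \<gamma> \<beta> \<longrightarrow> (\<forall>(u, v)\<in>E. \<gamma> u v = \<beta> u v))
     \<longleftrightarrow> (\<forall>w::real. strongly_connected (thr_verts E \<beta> w) (thr_edges E \<beta> w))"
proof
  assume L: "\<forall>\<gamma>. balanced V E \<gamma> \<and> equivalent E \<gamma> \<beta> \<longrightarrow> (\<forall>(u, v)\<in>E. \<gamma> u v = \<beta> u v)"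
  show "\<forall>w::real. strongly_connected (thr_verts E \<beta> w) (thr_edges E \<beta> w)"
  proof (rule ccontr)
    assume "\<not> (\<forall>w::real. strongly_connected (thr_verts E \<beta> w) (thr_edges E \<beta> w))"
    then obtain w where "\<not> strongly_connected (thr_verts E \<beta> w) (thr_edges E \<beta> w)" by blast
    from nonuniq[OF assms this] L show False by blast
  qed
next
  assume R: "\<forall>w::real. strongly_connected (thr_verts E \<beta> w) (thr_edges E \<beta> w)"
  show "\<forall>\<gamma>. balanced V E \<gamma> \<and> equivalent E \<gamma> \<beta> \<longrightarrow> (\<forall>(u, v)\<in>E. \<gamma> u v = \<beta> u v)"
  proof (intro allI impI, elim conjE)
    fix \<gamma> assume bg: "balanced V E \<gamma>" and eq: "equivalent E \<gamma> \<beta>"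
    have "\<forall>vs. directed_cycle E vs \<longrightarrow> cycle_sum (\<lambda>u v. \<gamma> u v - \<beta> u v) vs = 0"
      using eq by (simp add: equivalent_def)
    from potential_exists[OF assms(2,3) this] obtain p where
      "\<forall>(x, y)\<in>E. \<gamma> x y - \<beta> x y = p y - p x" by blast
    from uniq[OF assms(1,2,3) bg R this] show "\<forall>(u, v)\<in>E. \<gamma> u v = \<beta> u v" .
  qed
qed


end
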